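(* Let $p$ be a positive integer, $r\ge2$ an integer, $s=p+2r$, and $M=(m_{ij})\in\mathfrak{so}(r,\mathbb{C})$. Let $S$ be the $(r-1)\times r$ matrix $S=\big(I_{r-1}\mid m\big)$ whose last column is $m=(m_{1r},\dots,m_{r-1,r})^t$. Define $\hat\Phi^*:V^*_{ps}(\mathbb{R})\to\mathbb{C}^{(r-1)\times p}$ by $\hat\Phi^*(X)=S(W+M\bar W)Z^{-1}$, where for $X=(X_0;X_1;X_2;X_3)$ (blocks of $p,p,r,r$ rows) $Z=X_0+iX_1$ and $W=X_2+iX_3$. Then $\hat\Phi^*$ is independent of the last row of $X$, thus inducing a map $\Phi^*:V^*_{p,s-1}(\mathbb{R})\to\mathbb{C}^{(r-1)\times p}$, and the complex valued components of $\Phi^*$ form an orthogonal harmonic family of $\mathbf{GL}_p(\mathbb{R})$-invariant functions on $V^*_{p,s-1}(\mathbb{R})$, equipped with the Euclidean metric.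
   Context: $\mathfrak{so}(r,\mathbb{C})$ is the set of complex skew-symmetric $r\times r$ matrices. For $n\ge p$, $U^*_{pn}(\mathbb{R})=\{X\in\mathbb{R}^{(p+n)\times p}: X^tX\text{ invertible}\}$ and $V^*_{pn}(\mathbb{R})=\{X\in U^*_{pn}(\mathbb{R}): \det(X_0+iX_1)\neq0\}$, where $X_0,X_1$ are the first and second blocks of $p$ rows; $V^*_{p,s-1}(\mathbb{R})$ is identified with matrices obtained from elements of $V^*_{ps}(\mathbb{R})$ by deleting the last row. $\mathbf{GL}_p(\mathbb{R})$ acts by right multiplication. The Euclidean metric is $\langle X,Y\rangle=\mathrm{trace}(X^tY)$. For a Riemannian manifold $(M,g)$ and complex functions $\phi,\psi$, $\tau(\phi)$ is the Laplace–Beltrami operator (extended complex-linearly) and $\kappa(\phi,\psi)=g(\mathrm{grad}\,\phi,\mathrm{grad}\,\psi)$ with $g$ extended complex-bilinearly. A set $\Omega$ of complex functions is an orthogonal harmonic family if $\tau(\phi)=0$ and $\kappa(\phi,\psi)=0$ for all $\phi,\psi\in\Omega$. *)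

theory Defs
  imports "HOL-Analysis.Analysis" "Jordan_Normal_Form.Gauss_Jordan_Elimination"
    "Jordan_Normal_Form.Determinant"
begin

definition cmat :: "real mat \<Rightarrow> complex mat" where
  "cmat X = map_mat complex_of_real X"

definition cconj_mat :: "complex mat \<Rightarrow> complex mat" where
  "cconj_mat W = map_mat cnj W"

definition row_block :: "'a mat \<Rightarrow> nat \<Rightarrow> nat \<Rightarrow> 'a mat" where
  "row_block X a k = mat k (dim_col X) (\<lambda>(i,j). X $$ (a + i, j))"

definition U_star :: "nat \<Rightarrow> nat \<Rightarrow> real mat set" where
  "U_star p n = {X. X \<in> carrier_mat (p + n) p \<and> invertible_mat (transpose_mat X * X)}"

definition Zmat :: "nat \<Rightarrow> real mat \<Rightarrow> complex mat" where
  "Zmat p X = cmat (row_block X 0 p) + \<i> \<cdot>\<^sub>m cmat (row_block X p p)"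

definition V_star :: "nat \<Rightarrow> nat \<Rightarrow> real mat set" where
  "V_star p n = {X \<in> U_star p n. det (Zmat p X) \<noteq> 0}"

definition delete_last_row :: "'a mat \<Rightarrow> 'a mat" where
  "delete_last_row X = mat (dim_row X - 1) (dim_col X) (\<lambda>(i,j). X $$ (i, j))"

text \<open>V*_{p,s-1}: matrices obtained from elements of V*_{p,s} by deleting the last row.\<close>
definition V_star_del :: "nat \<Rightarrow> nat \<Rightarrow> real mat set" where
  "V_star_del p s = delete_last_row ` V_star p s"

definition append_zero_row :: "real mat \<Rightarrow> real mat" where
  "append_zero_row Y = mat (dim_row Y + 1) (dim_col Y)
     (\<lambda>(i,j). if i < dim_row Y then Y $$ (i, j) else 0)"

definition so_C :: "nat \<Rightarrow> complex mat set" where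
  "so_C r = {M. M \<in> carrier_mat r r \<and> transpose_mat M = - M}"

definition S_mat :: "nat \<Rightarrow> complex mat \<Rightarrow> complex mat" where
  "S_mat r M = mat (r - 1) r
     (\<lambda>(i,j). if j = r - 1 then M $$ (i, r - 1) else if i = j then 1 else 0)"

definition Phi_hat :: "nat \<Rightarrow> nat \<Rightarrow> complex mat \<Rightarrow> real mat \<Rightarrow> complex mat" where
  "Phi_hat p r M X =
     (let Z = Zmat p X;
          W = cmat (row_block X (2*p) r) + \<i> \<cdot>\<^sub>m cmat (row_block X (2*p + r) r)
      in S_mat r M * (W + M * cconj_mat W) * the (mat_inverse Z))"

text \<open>The induced map on V*_{p,s-1} (any extension works by the independence claim;
  we use the extension by a zero last row).\<close>
definition Phi_star :: "nat \<Rightarrow> nat \<Rightarrow> complex mat \<Rightarrow> real mat \<Rightarrow> complex mat" where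
  "Phi_star p r M Y = Phi_hat p r M (append_zero_row Y)"

definition upd_entry :: "real mat \<Rightarrow> nat \<Rightarrow> nat \<Rightarrow> real \<Rightarrow> real mat" where
  "upd_entry X a b t = mat (dim_row X) (dim_col X)
     (\<lambda>(i,j). if i = a \<and> j = b then t else X $$ (i, j))"

definition pderiv_entry :: "(real mat \<Rightarrow> complex) \<Rightarrow> real mat \<Rightarrow> nat \<Rightarrow> nat \<Rightarrow> complex" where
  "pderiv_entry f X a b = vector_derivative (\<lambda>t. f (upd_entry X a b t)) (at (X $$ (a, b)))"

definition pderiv2_entry :: "(real mat \<Rightarrow> complex) \<Rightarrow> real mat \<Rightarrow> nat \<Rightarrow> nat \<Rightarrow> complex" where
  "pderiv2_entry f X a b =
     vector_derivative (\<lambda>t. pderiv_entry f (upd_entry X a b t) a b) (at (X $$ (a, b)))"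

text \<open>Laplace-Beltrami operator tau and conformality operator kappa of the Euclidean
  metric trace(X^t Y), extended complex-(bi)linearly.\<close>
definition tau_eucl :: "(real mat \<Rightarrow> complex) \<Rightarrow> real mat \<Rightarrow> complex" where
  "tau_eucl f X = (\<Sum>a<dim_row X. \<Sum>b<dim_col X. pderiv2_entry f X a b)"

definition kappa_eucl :: "(real mat \<Rightarrow> complex) \<Rightarrow> (real mat \<Rightarrow> complex) \<Rightarrow> real mat \<Rightarrow> complex" where
  "kappa_eucl f g X = (\<Sum>a<dim_row X. \<Sum>b<dim_col X. pderiv_entry f X a b * pderiv_entry g X a b)"

definition twice_coord_diff_on :: "real mat set \<Rightarrow> (real mat \<Rightarrow> complex) \<Rightarrow> bool" where
  "twice_coord_diff_on D f \<longleftrightarrow> (\<forall>X\<in>D. \<forall>a<dim_row X. \<forall>b<dim_col X.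
      (\<forall>t. upd_entry X a b t \<in> D \<longrightarrow>
         (\<lambda>u. f (upd_entry X a b u)) differentiable (at t)) \<and>
      (\<lambda>t. pderiv_entry f (upd_entry X a b t) a b) differentiable (at (X $$ (a, b))))"

definition orthogonal_harmonic_family :: "real mat set \<Rightarrow> (real mat \<Rightarrow> complex) set \<Rightarrow> bool" where
  "orthogonal_harmonic_family D \<Omega> \<longleftrightarrow>
     (\<forall>\<phi>\<in>\<Omega>. twice_coord_diff_on D \<phi> \<and> (\<forall>X\<in>D. tau_eucl \<phi> X = 0)) \<and>
     (\<forall>\<phi>\<in>\<Omega>. \<forall>\<psi>\<in>\<Omega>. \<forall>X\<in>D. kappa_eucl \<phi> \<psi> X = 0)"

definition GL_invariant_on :: "nat \<Rightarrow> real mat set \<Rightarrow> (real mat \<Rightarrow> complex) \<Rightarrow> bool" where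
  "GL_invariant_on p D f \<longleftrightarrow>
     (\<forall>X\<in>D. \<forall>g. g \<in> carrier_mat p p \<and> invertible_mat g \<longrightarrow> f (X * g) = f X)"

end

theory Submission
  imports Defs
begin
lemma inv_unique:
  fixes A B :: "'a::field mat"
  assumes A: "A \<in> carrier_mat n n" and B: "B \<in> carrier_mat n n" and AB: "A * B = 1\<^sub>m n"
  shows "mat_inverse A = Some B"
proof -
  from det_mult[OF A B] AB have "det A \<noteq> 0" by auto
  from det_non_zero_imp_unit[OF A this] have U: "A \<in> Units (ring_mat TYPE('a) n undefined)" .
  obtain C where C: "mat_inverse A = Some C"
    using mat_inverse(1)[OF A, of undefined] U by (cases "mat_inverse A") auto
  from mat_inverse(2)[OF A C] have CA: "C * A = 1\<^sub>m n" and Cc: "C \<in> carrier_mat n n" by auto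
  have "C = C * (A * B)" using Cc by (simp add: AB)
  also have "\<dots> = (C * A) * B" using A B Cc by (simp add: assoc_mult_mat)
  also have "\<dots> = B" using B CA by simp
  finally show ?thesis using C by simp
qed

lemma det_inv:
  fixes A :: "'a::field mat"
  assumes A: "A \<in> carrier_mat n n" and d: "det A \<noteq> 0"
  shows "\<exists>B. mat_inverse A = Some B \<and> A * B = 1\<^sub>m n \<and> B \<in> carrier_mat n n"
proof -
  from det_non_zero_imp_unit[OF A d] have U: "A \<in> Units (ring_mat TYPE('a) n undefined)" .
  obtain C where C: "mat_inverse A = Some C"
    using mat_inverse(1)[OF A, of undefined] U by (cases "mat_inverse A") auto
  thus ?thesis using mat_inverse(2)[OF A C] by auto
qed

lemma Zmat_carrier: "Zmat p Y \<in> carrier_mat p (dim_col Y)"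
  by (simp add: Zmat_def cmat_def row_block_def)

lemma Zmat_index: "i < p \<Longrightarrow> j < dim_col Y \<Longrightarrow>
   Zmat p Y $$ (i,j) = complex_of_real (Y $$ (i,j)) + \<i> * complex_of_real (Y $$ (p+i,j))"
  by (simp add: Zmat_def cmat_def row_block_def)

definition A1 :: "nat \<Rightarrow> complex mat \<Rightarrow> nat \<Rightarrow> nat \<Rightarrow> complex" where
  "A1 r M k a = S_mat r M $$ (k,a) + (\<Sum>c<r. S_mat r M $$ (k,c) * M $$ (c,a))"
definition A2 :: "nat \<Rightarrow> complex mat \<Rightarrow> nat \<Rightarrow> nat \<Rightarrow> complex" where
  "A2 r M k a = S_mat r M $$ (k,a) - (\<Sum>c<r. S_mat r M $$ (k,c) * M $$ (c,a))"

definition Cf :: "nat \<Rightarrow> nat \<Rightarrow> complex mat \<Rightarrow> real mat \<Rightarrow> nat \<Rightarrow> nat \<Rightarrow> complex" where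
  "Cf p r M X k j = (\<Sum>a<r. A1 r M k a * complex_of_real (X $$ (2*p+a, j)))
     + \<i> * (\<Sum>a<r-1. A2 r M k a * complex_of_real (X $$ (2*p+r+a, j)))"

lemma A2_last:
  assumes M: "M \<in> so_C r" and r: "r \<ge> 2" and k: "k < r - 1"
  shows "A2 r M k (r-1) = 0"
proof -
  have Mc: "M \<in> carrier_mat r r" and T: "transpose_mat M = - M" using M by (auto simp: so_C_def)
  have "M $$ (r-1,r-1) = - M $$ (r-1,r-1)"
    using arg_cong[OF T, of "\<lambda>A. A $$ (r-1,r-1)"] Mc r by auto
  hence d: "M $$ (r-1,r-1) = 0" by simp
  have Sk: "\<And>c. c < r \<Longrightarrow> S_mat r M $$ (k,c) = (if c = r-1 then M $$ (k, r-1) else if k = c then 1 else 0)"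
    using k by (simp add: S_mat_def)
  have "(\<Sum>c<r. S_mat r M $$ (k,c) * M $$ (c,r-1))
       = (\<Sum>c<r. (if c = r-1 then M $$ (k, r-1) * M $$ (r-1,r-1) else 0) + (if c = k then M $$ (k,r-1) else 0))"
    using k by (intro sum.cong) (auto simp: Sk)
  also have "\<dots> = M $$ (k, r-1)" using k r d by (simp add: sum.distrib)
  finally show ?thesis using k r by (simp add: A2_def S_mat_def)
qed

lemma cpl: fixes s t w :: complex
  shows "s * w + t * cnj w = (s + t) * complex_of_real (Re w) + \<i> * ((s - t) * complex_of_real (Im w))"
  by (simp add: complex_eq_iff algebra_simps)

lemma Cf_expand:
  assumes Mc: "M \<in> carrier_mat r r" and k: "k < r - 1" and A2l: "A2 r M k (r-1) = 0" and r: "r \<ge> 1"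
  shows "(\<Sum>c<r. S_mat r M $$ (k,c) * (W c + (\<Sum>a<r. M $$ (c,a) * cnj (W a))))
    = (\<Sum>a<r. A1 r M k a * complex_of_real (Re (W a)))
     + \<i> * (\<Sum>a<r-1. A2 r M k a * complex_of_real (Im (W a)))"
proof -
  let ?S = "\<lambda>c. S_mat r M $$ (k,c)"
  have "(\<Sum>c<r. ?S c * (W c + (\<Sum>a<r. M $$ (c,a) * cnj (W a))))
     = (\<Sum>c<r. ?S c * W c) + (\<Sum>c<r. \<Sum>a<r. ?S c * M $$ (c,a) * cnj (W a))"
    by (simp add: sum.distrib distrib_left sum_distrib_left mult.assoc)
  also have "(\<Sum>c<r. \<Sum>a<r. ?S c * M $$ (c,a) * cnj (W a)) = (\<Sum>a<r. (\<Sum>c<r. ?S c * M $$ (c,a)) * cnj (W a))"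
    by (subst sum.swap) (simp add: sum_distrib_right)
  also have "(\<Sum>c<r. ?S c * W c) + (\<Sum>a<r. (\<Sum>c<r. ?S c * M $$ (c,a)) * cnj (W a))
     = (\<Sum>a<r. A1 r M k a * complex_of_real (Re (W a)) + \<i> * (A2 r M k a * complex_of_real (Im (W a))))"
    unfolding sum.distrib[symmetric]
  proof (intro sum.cong refl)
    fix a
    show "?S a * W a + (\<Sum>c<r. ?S c * M $$ (c,a)) * cnj (W a) =
       A1 r M k a * complex_of_real (Re (W a)) + \<i> * (A2 r M k a * complex_of_real (Im (W a)))"
      unfolding A1_def A2_def by (simp add: complex_eq_iff algebra_simps)
  qed
  also have "\<dots> = (\<Sum>a<r. A1 r M k a * complex_of_real (Re (W a)))
       + \<i> * (\<Sum>a<r. A2 r M k a * complex_of_real (Im (W a)))"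
    by (simp add: sum.distrib sum_distrib_left)
  also have "(\<Sum>a<r. A2 r M k a * complex_of_real (Im (W a))) = (\<Sum>a<r-1. A2 r M k a * complex_of_real (Im (W a)))"
  proof -
    have "{..<r} = insert (r-1) {..<r-1}" using r by auto
    thus ?thesis using A2l by simp
  qed
  finally show ?thesis .
qed

lemma mult_entry: "A \<in> carrier_mat m n \<Longrightarrow> B \<in> carrier_mat n q \<Longrightarrow> i < m \<Longrightarrow> j < q \<Longrightarrow>
   (A * B) $$ (i,j) = (\<Sum>c<n. A $$ (i,c) * B $$ (c,j))"
  by (simp add: scalar_prod_def atLeast0LessThan)

lemma Phi_hat_entry:
  assumes dX: "dim_col X = p" and Mc: "M \<in> carrier_mat r r" and k: "k < r - 1" and l: "l < p"
    and inv: "mat_inverse (Zmat p X) = Some N" and A2l: "A2 r M k (r-1) = 0" and r: "r \<ge> 1"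
  shows "Phi_hat p r M X $$ (k,l) = (\<Sum>j<p. Cf p r M X k j * N $$ (j,l))"
proof -
  have Nc: "N \<in> carrier_mat p p" using mat_inverse(2)[OF _ inv] Zmat_carrier[of p X] dX by auto
  define W where "W = cmat (row_block X (2*p) r) + \<i> \<cdot>\<^sub>m cmat (row_block X (2*p + r) r)"
  have Wc: "W \<in> carrier_mat r p" using dX by (simp add: W_def cmat_def row_block_def)
  have Wi: "\<And>a j. a < r \<Longrightarrow> j < p \<Longrightarrow> W $$ (a,j) = complex_of_real (X $$ (2*p+a,j)) + \<i> * complex_of_real (X $$ (2*p+r+a,j))"
    using dX by (simp add: W_def cmat_def row_block_def)
  have Sc: "S_mat r M \<in> carrier_mat (r-1) r" by (simp add: S_mat_def)
  have B: "W + M * cconj_mat W \<in> carrier_mat r p" using Wc Mc by (simp add: cconj_mat_def)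
  have E1: "(S_mat r M * (W + M * cconj_mat W)) $$ (k,j) = Cf p r M X k j" if j: "j < p" for j
  proof -
    have "(S_mat r M * (W + M * cconj_mat W)) $$ (k,j) = (\<Sum>c<r. S_mat r M $$ (k,c) * (W + M * cconj_mat W) $$ (c,j))"
      by (rule mult_entry[OF Sc B k j])
    also have "\<dots> = (\<Sum>c<r. S_mat r M $$ (k,c) * ((\<lambda>a. W $$ (a,j)) c + (\<Sum>a<r. M $$ (c,a) * cnj ((\<lambda>a. W $$ (a,j)) a))))"
    proof (intro sum.cong refl)
      fix c assume c: "c \<in> {..<r}"
      have "(M * cconj_mat W) $$ (c,j) = (\<Sum>a<r. M $$ (c,a) * cconj_mat W $$ (a,j))"
        by (rule mult_entry[OF Mc _ _ j]) (use Wc c in \<open>auto simp: cconj_mat_def\<close>)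
      also have "\<dots> = (\<Sum>a<r. M $$ (c,a) * cnj (W $$ (a,j)))"
        using Wc j by (intro sum.cong refl) (auto simp: cconj_mat_def)
      finally show "S_mat r M $$ (k,c) * (W + M * cconj_mat W) $$ (c,j) = S_mat r M $$ (k,c) * ((\<lambda>a. W $$ (a,j)) c + (\<Sum>a<r. M $$ (c,a) * cnj ((\<lambda>a. W $$ (a,j)) a)))"
        using c j Wc Mc by (simp add: cconj_mat_def)
    qed
    also have "\<dots> = (\<Sum>a<r. A1 r M k a * complex_of_real (Re (W $$ (a,j))))
     + \<i> * (\<Sum>a<r-1. A2 r M k a * complex_of_real (Im (W $$ (a,j))))"
      by (rule Cf_expand[OF Mc k A2l r])
    also have "\<dots> = Cf p r M X k j" unfolding Cf_def using Wi j r
      by (intro arg_cong2[where f="(+)"] arg_cong2[where f="(*)"] refl sum.cong) auto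
    finally show ?thesis .
  qed
  have "Phi_hat p r M X = S_mat r M * (W + M * cconj_mat W) * N"
    by (simp add: Phi_hat_def W_def inv Let_def)
  also have "\<dots> $$ (k,l) = (\<Sum>j<p. (S_mat r M * (W + M * cconj_mat W)) $$ (k,j) * N $$ (j,l))"
    by (rule mult_entry[OF _ Nc k l]) (use Sc B in auto)
  also have "\<dots> = (\<Sum>j<p. Cf p r M X k j * N $$ (j,l))" using E1 by simp
  finally show ?thesis .
qed

lemma Phi_hat_carrier:
  assumes dX: "dim_col X = p" and inv: "mat_inverse (Zmat p X) = Some N"
  shows "Phi_hat p r M X \<in> carrier_mat (r-1) p"
proof -
  have Nc: "N \<in> carrier_mat p p" using mat_inverse(2)[OF _ inv] Zmat_carrier[of p X] dX by auto
  have "Phi_hat p r M X = S_mat r M * (cmat (row_block X (2*p) r) + \<i> \<cdot>\<^sub>m cmat (row_block X (2*p + r) r) + M * cconj_mat (cmat (row_block X (2*p) r) + \<i> \<cdot>\<^sub>m cmat (row_block X (2*p + r) r))) * N"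
    by (simp add: Phi_hat_def inv Let_def)
  then show ?thesis using Nc unfolding carrier_mat_def by (simp add: S_mat_def)
qed

lemma Zmat_cong:
  assumes "dim_col X = p" "dim_col X' = p" "\<forall>i<2*p. \<forall>j<p. X $$ (i,j) = X' $$ (i,j)"
  shows "Zmat p X = Zmat p X'"
  by (rule eq_matI) (use assms in \<open>auto simp: Zmat_def cmat_def row_block_def\<close>)

lemma Cf_cong:
  assumes "\<forall>i<2*p+2*r-1. X $$ (i,j) = X' $$ (i,j)"
  shows "Cf p r M X k j = Cf p r M X' k j"
  unfolding Cf_def using assms by (intro arg_cong2[where f="(+)"] arg_cong2[where f="(*)"] refl sum.cong) auto

lemma Phi_hat_eq:
  assumes dX: "dim_col X = p" and dX': "dim_col X' = p"
    and ag: "\<forall>i<2*p+2*r-1. \<forall>j<p. X $$ (i,j) = X' $$ (i,j)"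
    and d: "det (Zmat p X) \<noteq> 0" and M: "M \<in> so_C r" and r: "r \<ge> 2"
  shows "Phi_hat p r M X = Phi_hat p r M X'"
proof -
  have Mc: "M \<in> carrier_mat r r" using M by (simp add: so_C_def)
  have ag2: "\<forall>i<2*p. \<forall>j<p. X $$ (i,j) = X' $$ (i,j)"
  proof (intro allI impI)
    fix i j assume "i < 2*p" "j < p"
    thus "X $$ (i,j) = X' $$ (i,j)" using ag r by simp
  qed
  have Z: "Zmat p X = Zmat p X'" by (rule Zmat_cong[OF dX dX' ag2])
  obtain N where inv: "mat_inverse (Zmat p X) = Some N"
    using det_inv[OF _ d] Zmat_carrier[of p X] dX by auto
  have inv': "mat_inverse (Zmat p X') = Some N" using inv Z by simp
  show ?thesis
  proof (rule eq_matI)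
    fix k l assume k: "k < dim_row (Phi_hat p r M X')" and l: "l < dim_col (Phi_hat p r M X')"
    have k': "k < r - 1" and l': "l < p" using k l Phi_hat_carrier[OF dX' inv', of r M] by auto
    have A2l: "A2 r M k (r-1) = 0" by (rule A2_last[OF M r k'])
    have "(\<Sum>j<p. Cf p r M X k j * N $$ (j,l)) = (\<Sum>j<p. Cf p r M X' k j * N $$ (j,l))"
    proof (intro sum.cong refl arg_cong2[where f="(*)"] Cf_cong allI impI)
      fix j i assume j: "j \<in> {..<p}" and i: "i < 2*p+2*r-1"
      thus "X $$ (i,j) = X' $$ (i,j)" using ag by simp
    qed
    thus "Phi_hat p r M X $$ (k,l) = Phi_hat p r M X' $$ (k,l)"
      using Phi_hat_entry[OF dX Mc k' l' inv A2l] Phi_hat_entry[OF dX' Mc k' l' inv' A2l] r by simp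
  qed (use Phi_hat_carrier[OF dX inv, of r M] Phi_hat_carrier[OF dX' inv', of r M] in auto)
qed

lemma Vstar_props:
  assumes "X \<in> V_star p s"
  shows "X \<in> carrier_mat (p+s) p" "det (Zmat p X) \<noteq> 0"
  using assms by (auto simp: V_star_def U_star_def)

lemma delete_last_row_index: "i < dim_row X - 1 \<Longrightarrow> j < dim_col X \<Longrightarrow> delete_last_row X $$ (i,j) = X $$ (i,j)"
  by (simp add: delete_last_row_def)

lemma claim1:
  assumes s: "s = p + 2*r" and M: "M \<in> so_C r" and r: "r \<ge> 2"
  shows "\<forall>X\<in>V_star p s. \<forall>X'\<in>V_star p s.
            delete_last_row X = delete_last_row X' \<longrightarrow> Phi_hat p r M X = Phi_hat p r M X'"
proof (intro ballI impI)
  fix X X' assume X: "X \<in> V_star p s" and X': "X' \<in> V_star p s" and e: "delete_last_row X = delete_last_row X'"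
  note cX = Vstar_props(1)[OF X] and cX' = Vstar_props(1)[OF X']
  have ag: "\<forall>i<2*p+2*r-1. \<forall>j<p. X $$ (i,j) = X' $$ (i,j)"
  proof (intro allI impI)
    fix i j assume i: "i < 2*p+2*r-1" and j: "j < p"
    have "X $$ (i,j) = delete_last_row X $$ (i,j)" using i j cX s by (simp add: delete_last_row_index)
    also have "\<dots> = X' $$ (i,j)" unfolding e using i j cX' s by (simp add: delete_last_row_index)
    finally show "X $$ (i,j) = X' $$ (i,j)" .
  qed
  show "Phi_hat p r M X = Phi_hat p r M X'"
    by (rule Phi_hat_eq[OF _ _ ag Vstar_props(2)[OF X] M r]) (use cX cX' in auto)
qed

lemma claim2:
  assumes s: "s = p + 2*r" and M: "M \<in> so_C r" and r: "r \<ge> 2"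
  shows "\<forall>X\<in>V_star p s. Phi_star p r M (delete_last_row X) = Phi_hat p r M X"
proof
  fix X assume X: "X \<in> V_star p s"
  note cX = Vstar_props(1)[OF X]
  let ?X' = "append_zero_row (delete_last_row X)"
  have dd: "delete_last_row X \<in> carrier_mat (2*p+2*r-1) p" using cX s by (simp add: delete_last_row_def)
  have ag: "\<forall>i<2*p+2*r-1. \<forall>j<p. X $$ (i,j) = ?X' $$ (i,j)"
  proof (intro allI impI)
    fix i j assume i: "i < 2*p+2*r-1" and j: "j < p"
    have "?X' $$ (i,j) = delete_last_row X $$ (i,j)" using dd i j by (simp add: append_zero_row_def)
    also have "\<dots> = X $$ (i,j)" using cX s i j by (simp add: delete_last_row_index)
    finally show "X $$ (i,j) = ?X' $$ (i,j)" by (rule sym)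
  qed
  have "Phi_hat p r M X = Phi_hat p r M ?X'"
    by (rule Phi_hat_eq[OF _ _ ag Vstar_props(2)[OF X] M r]) (use cX dd in \<open>simp_all add: append_zero_row_def\<close>)
  thus "Phi_star p r M (delete_last_row X) = Phi_hat p r M X" by (simp add: Phi_star_def)
qed

lemma Phi_star_entry:
  assumes Y: "Y \<in> carrier_mat (2*p+2*r-1) p" and inv: "mat_inverse (Zmat p Y) = Some N"
    and M: "M \<in> so_C r" and r: "r \<ge> 2" and k: "k < r - 1" and l: "l < p"
  shows "Phi_star p r M Y $$ (k,l) = (\<Sum>j<p. Cf p r M Y k j * N $$ (j,l))"
proof -
  let ?X = "append_zero_row Y"
  have Mc: "M \<in> carrier_mat r r" using M by (simp add: so_C_def)
  have dX: "dim_col ?X = p" using Y by (simp add: append_zero_row_def)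
  have ag: "\<forall>i<2*p+2*r-1. \<forall>j<p. ?X $$ (i,j) = Y $$ (i,j)"
    using Y by (simp add: append_zero_row_def)
  have ag2: "\<forall>i<2*p. \<forall>j<p. ?X $$ (i,j) = Y $$ (i,j)"
  proof (intro allI impI)
    fix i j assume "i < 2*p" "j < p"
    thus "?X $$ (i,j) = Y $$ (i,j)" using ag r by simp
  qed
  have Z: "Zmat p ?X = Zmat p Y" by (rule Zmat_cong[OF dX _ ag2]) (use Y in simp)
  have inv': "mat_inverse (Zmat p ?X) = Some N" using inv Z by simp
  have A2l: "A2 r M k (r-1) = 0" by (rule A2_last[OF M r k])
  have "Phi_star p r M Y $$ (k,l) = (\<Sum>j<p. Cf p r M ?X k j * N $$ (j,l))"
    unfolding Phi_star_def by (rule Phi_hat_entry[OF dX Mc k l inv' A2l]) (use r in simp)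
  also have "\<dots> = (\<Sum>j<p. Cf p r M Y k j * N $$ (j,l))"
  proof (intro sum.cong refl arg_cong2[where f="(*)"] Cf_cong allI impI)
    fix j i assume j: "j \<in> {..<p}" and i: "i < 2*p+2*r-1"
    thus "?X $$ (i,j) = Y $$ (i,j)" using ag by simp
  qed
  finally show ?thesis .
qed

lemma upd_carrier: "Y \<in> carrier_mat m q \<Longrightarrow> upd_entry Y a b u \<in> carrier_mat m q"
  by (simp add: upd_entry_def)

lemma upd_index: "i < dim_row Y \<Longrightarrow> j < dim_col Y \<Longrightarrow>
   upd_entry Y a b u $$ (i,j) = (if i = a \<and> j = b then u else Y $$ (i,j))"
  by (simp add: upd_entry_def)

lemma upd_upd: "a < dim_row Y \<Longrightarrow> b < dim_col Y \<Longrightarrow> upd_entry (upd_entry Y a b t) a b u = upd_entry Y a b u"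
  by (rule eq_matI) (auto simp: upd_entry_def)

lemma upd_self: "a < dim_row Y \<Longrightarrow> b < dim_col Y \<Longrightarrow> upd_entry Y a b t $$ (a,b) = t"
  by (simp add: upd_entry_def)

lemma sherman_morrison:
  fixes Z N :: "complex mat"
  assumes Z: "Z \<in> carrier_mat p p" and N: "N \<in> carrier_mat p p" and ZN: "Z * N = 1\<^sub>m p"
    and Z': "Z' \<in> carrier_mat p p"
    and Ze: "\<And>i j. i < p \<Longrightarrow> j < p \<Longrightarrow> Z' $$ (i,j) = Z $$ (i,j) + (if i = \<alpha> \<and> j = \<beta> then \<sigma> else 0)"
    and \<alpha>: "\<alpha> < p" and \<beta>: "\<beta> < p" and d: "1 + \<sigma> * N $$ (\<beta>,\<alpha>) \<noteq> 0"
  shows "Z' * mat p p (\<lambda>(j,l). N $$ (j,l) - \<sigma> * N $$ (j,\<alpha>) * N $$ (\<beta>,l) / (1 + \<sigma> * N $$ (\<beta>,\<alpha>))) = 1\<^sub>m p"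
    (is "Z' * ?N' = _")
proof (rule eq_matI)
  let ?d = "1 + \<sigma> * N $$ (\<beta>,\<alpha>)"
  have ZNe: "(\<Sum>j<p. Z $$ (i,j) * N $$ (j,l)) = (if i = l then 1 else 0)" if "i < p" "l < p" for i l
    using arg_cong[OF ZN, of "\<lambda>A. A $$ (i,l)"] mult_entry[OF Z N that] that by simp
  fix i l assume i: "i < dim_row (1\<^sub>m p :: complex mat)" and l: "l < dim_col (1\<^sub>m p :: complex mat)"
  hence i: "i < p" and l: "l < p" by auto
  have "(Z' * ?N') $$ (i,l) = (\<Sum>j<p. Z' $$ (i,j) * ?N' $$ (j,l))"
    by (rule mult_entry[OF Z' _ i l]) simp
  also have "\<dots> = (\<Sum>j<p. Z $$ (i,j) * ?N' $$ (j,l)) + (\<Sum>j<p. (if i = \<alpha> \<and> j = \<beta> then \<sigma> else 0) * ?N' $$ (j,l))"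
    by (simp add: Ze i sum.distrib distrib_right)
  also have "(\<Sum>j<p. Z $$ (i,j) * ?N' $$ (j,l)) = (\<Sum>j<p. Z $$ (i,j) * N $$ (j,l) - (\<sigma> / ?d * N $$ (\<beta>,l)) * (Z $$ (i,j) * N $$ (j,\<alpha>)))"
    using l by (intro sum.cong refl) (simp add: algebra_simps)
  also have "\<dots> = (\<Sum>j<p. Z $$ (i,j) * N $$ (j,l)) - (\<sigma> / ?d * N $$ (\<beta>,l)) * (\<Sum>j<p. Z $$ (i,j) * N $$ (j,\<alpha>))"
    by (simp add: sum_subtractf sum_distrib_left)
  also have "(\<Sum>j<p. (if i = \<alpha> \<and> j = \<beta> then \<sigma> else 0) * ?N' $$ (j,l)) = (if i = \<alpha> then \<sigma> * ?N' $$ (\<beta>,l) else 0)"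
    using \<beta> by (simp add: if_distrib[of "\<lambda>x. x * _"] sum.delta' cong: if_cong)
  also have "\<sigma> * ?N' $$ (\<beta>,l) = \<sigma> * N $$ (\<beta>,l) / ?d"
    using \<beta> l d by (simp add: field_simps)
  finally have "(Z' * ?N') $$ (i,l) = (if i = l then 1 else 0) - (\<sigma> / ?d * N $$ (\<beta>,l)) * (if i = \<alpha> then 1 else 0)
      + (if i = \<alpha> then \<sigma> * N $$ (\<beta>,l) / ?d else 0)"
    using ZNe[OF i l] ZNe[OF i \<alpha>] by simp
  then show "(Z' * ?N') $$ (i,l) = 1\<^sub>m p $$ (i,l)"
    using i l by (cases "i = \<alpha>") auto
qed (use Z' in auto)

lemma Cf_cong2:
  assumes "\<And>i. 2*p \<le> i \<Longrightarrow> i < 2*p+2*r-1 \<Longrightarrow> X $$ (i,j) = X' $$ (i,j)"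
  shows "Cf p r M X k j = Cf p r M X' k j"
  unfolding Cf_def using assms by (intro arg_cong2[where f="(+)"] arg_cong2[where f="(*)"] refl sum.cong) auto

lemma Z_line:
  assumes Y: "Y \<in> carrier_mat (2*p+2*r-1) p" and inv: "mat_inverse (Zmat p Y) = Some N"
    and M: "M \<in> so_C r" and r: "r \<ge> 2" and k: "k < r - 1" and l: "l < p"
    and a: "a < 2*p" and b: "b < p"
    and d: "1 + (if a < p then 1 else \<i>) * (complex_of_real u - complex_of_real (Y $$ (a,b))) * N $$ (b, if a < p then a else a - p) \<noteq> 0"
  shows "Phi_star p r M (upd_entry Y a b u) $$ (k,l) =
    (\<Sum>j<p. Cf p r M Y k j * N $$ (j,l))
    - (if a < p then 1 else \<i>) * (complex_of_real u - complex_of_real (Y $$ (a,b)))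
      * ((\<Sum>j<p. Cf p r M Y k j * N $$ (j, if a < p then a else a - p)) * N $$ (b,l))
      / (1 + (if a < p then 1 else \<i>) * (complex_of_real u - complex_of_real (Y $$ (a,b))) * N $$ (b, if a < p then a else a - p))"
proof -
  define \<alpha> where "\<alpha> = (if a < p then a else a - p)"
  define \<sigma> where "\<sigma> = (if a < p then 1 else \<i>) * (complex_of_real u - complex_of_real (Y $$ (a,b)))"
  have \<alpha>: "\<alpha> < p" using a by (auto simp: \<alpha>_def)
  have dY: "dim_row Y = 2*p+2*r-1" "dim_col Y = p" using Y by auto
  have Nc: "N \<in> carrier_mat p p" and ZN: "Zmat p Y * N = 1\<^sub>m p"
    using mat_inverse(2)[OF _ inv] Zmat_carrier[of p Y] dY by auto
  let ?Y' = "upd_entry Y a b u"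
  have Y': "?Y' \<in> carrier_mat (2*p+2*r-1) p" by (rule upd_carrier[OF Y])
  have Zc': "Zmat p ?Y' \<in> carrier_mat p p" using Zmat_carrier[of p ?Y'] Y' by auto
  have Zc: "Zmat p Y \<in> carrier_mat p p" using Zmat_carrier[of p Y] dY by auto
  have Ze: "Zmat p ?Y' $$ (i,j) = Zmat p Y $$ (i,j) + (if i = \<alpha> \<and> j = b then \<sigma> else 0)"
    if i: "i < p" and j: "j < p" for i j
  proof -
    have i1: "i < dim_row Y" "p + i < dim_row Y" using i r dY by auto
    have j1: "j < dim_col Y" using j dY by auto
    have "Zmat p ?Y' $$ (i,j) = complex_of_real (?Y' $$ (i,j)) + \<i> * complex_of_real (?Y' $$ (p+i,j))"
      by (rule Zmat_index[OF i]) (use j Y' in auto)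
    also have "\<dots> = complex_of_real (if i = a \<and> j = b then u else Y $$ (i,j))
        + \<i> * complex_of_real (if p + i = a \<and> j = b then u else Y $$ (p+i,j))"
      using upd_index[OF i1(1) j1] upd_index[OF i1(2) j1] by simp
    also have "\<dots> = Zmat p Y $$ (i,j) + (if i = \<alpha> \<and> j = b then \<sigma> else 0)"
      unfolding Zmat_index[OF i j1] \<alpha>_def \<sigma>_def using i a by (auto simp: algebra_simps)
    finally show ?thesis .
  qed
  define N' where "N' = mat p p (\<lambda>(j,l). N $$ (j,l) - \<sigma> * N $$ (j,\<alpha>) * N $$ (b,l) / (1 + \<sigma> * N $$ (b,\<alpha>)))"
  have dd: "1 + \<sigma> * N $$ (b,\<alpha>) \<noteq> 0" using d unfolding \<sigma>_def \<alpha>_def .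
  have ZN': "Zmat p ?Y' * N' = 1\<^sub>m p"
    unfolding N'_def by (rule sherman_morrison[OF Zc Nc ZN Zc' Ze \<alpha> b dd])
  have inv': "mat_inverse (Zmat p ?Y') = Some N'"
    by (rule inv_unique[OF Zc' _ ZN']) (simp add: N'_def)
  have "Phi_star p r M ?Y' $$ (k,l) = (\<Sum>j<p. Cf p r M ?Y' k j * N' $$ (j,l))"
    by (rule Phi_star_entry[OF Y' inv' M r k l])
  also have "\<dots> = (\<Sum>j<p. Cf p r M Y k j * N $$ (j,l) - (\<sigma> * N $$ (b,l) / (1 + \<sigma> * N $$ (b,\<alpha>))) * (Cf p r M Y k j * N $$ (j,\<alpha>)))"
  proof (intro sum.cong refl)
    fix j assume j: "j \<in> {..<p}"
    have "Cf p r M ?Y' k j = Cf p r M Y k j"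
      by (rule Cf_cong2) (use a j dY in \<open>auto simp: upd_index\<close>)
    thus "Cf p r M ?Y' k j * N' $$ (j,l) = Cf p r M Y k j * N $$ (j,l) - (\<sigma> * N $$ (b,l) / (1 + \<sigma> * N $$ (b,\<alpha>))) * (Cf p r M Y k j * N $$ (j,\<alpha>))"
      using j l by (simp add: N'_def algebra_simps)
  qed
  also have "\<dots> = (\<Sum>j<p. Cf p r M Y k j * N $$ (j,l)) - (\<sigma> * N $$ (b,l) / (1 + \<sigma> * N $$ (b,\<alpha>))) * (\<Sum>j<p. Cf p r M Y k j * N $$ (j,\<alpha>))"
    by (simp add: sum_subtractf sum_distrib_left)
  finally show ?thesis unfolding \<sigma>_def \<alpha>_def by (simp add: algebra_simps)
qed

lemma sum_delta_shift:
  fixes f :: "nat \<Rightarrow> 'a::comm_ring_1"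
  shows "(\<Sum>x<m. f x * (if K + x = a then \<delta> else 0)) = (if K \<le> a \<and> a < K + m then f (a - K) * \<delta> else 0)"
proof (cases "K \<le> a")
  case True
  have "(\<Sum>x<m. f x * (if K + x = a then \<delta> else 0)) = (\<Sum>x<m. if a - K = x then f x * \<delta> else 0)"
    using True by (intro sum.cong) auto
  also have "\<dots> = (if a - K \<in> {..<m} then f (a - K) * \<delta> else 0)" by simp
  finally show ?thesis using True by auto
next
  case False
  thus ?thesis by (intro trans[OF sum.neutral]) auto
qed

lemma Cf_upd:
  assumes Y: "Y \<in> carrier_mat (2*p+2*r-1) p" and a1: "2*p \<le> a" and a2: "a < 2*p+2*r-1" and b: "b < p" and j: "j < p"
    and r: "r \<ge> 2"
  shows "Cf p r M (upd_entry Y a b u) k j = Cf p r M Y k j + (if j = b then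
     (complex_of_real u - complex_of_real (Y $$ (a,b))) * (if a < 2*p+r then A1 r M k (a-2*p) else \<i> * A2 r M k (a-2*p-r)) else 0)"
proof (cases "j = b")
  case False
  have "Cf p r M (upd_entry Y a b u) k j = Cf p r M Y k j"
    by (rule Cf_cong2) (use Y False j in \<open>auto simp: upd_index\<close>)
  thus ?thesis using False by simp
next
  case True
  let ?\<delta> = "complex_of_real u - complex_of_real (Y $$ (a,b))"
  have e: "complex_of_real (upd_entry Y a b u $$ (i, j)) = complex_of_real (Y $$ (i,j)) + (if i = a then ?\<delta> else 0)"
    if "i < 2*p+2*r-1" for i
    using that Y True j by (auto simp: upd_index)
  have "Cf p r M (upd_entry Y a b u) k j =
     (\<Sum>x<r. A1 r M k x * (complex_of_real (Y $$ (2*p+x,j)) + (if 2*p + x = a then ?\<delta> else 0)))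
     + \<i> * (\<Sum>x<r-1. A2 r M k x * (complex_of_real (Y $$ (2*p+r+x,j)) + (if (2*p+r) + x = a then ?\<delta> else 0)))"
    unfolding Cf_def using r by (intro arg_cong2[where f="(+)"] arg_cong2[where f="(*)"] refl sum.cong) (auto simp: e)
  also have "\<dots> = Cf p r M Y k j + ((\<Sum>x<r. A1 r M k x * (if 2*p + x = a then ?\<delta> else 0))
     + \<i> * (\<Sum>x<r-1. A2 r M k x * (if (2*p+r) + x = a then ?\<delta> else 0)))"
    unfolding Cf_def by (simp add: distrib_left sum.distrib algebra_simps)
  also have "(\<Sum>x<r. A1 r M k x * (if 2*p + x = a then ?\<delta> else 0))
     + \<i> * (\<Sum>x<r-1. A2 r M k x * (if (2*p+r) + x = a then ?\<delta> else 0))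
     = ?\<delta> * (if a < 2*p+r then A1 r M k (a-2*p) else \<i> * A2 r M k (a-2*p-r))"
    unfolding sum_delta_shift using a1 a2 r by auto
  finally show ?thesis using True by simp
qed

lemma W_line:
  assumes Y: "Y \<in> carrier_mat (2*p+2*r-1) p" and inv: "mat_inverse (Zmat p Y) = Some N"
    and M: "M \<in> so_C r" and r: "r \<ge> 2" and k: "k < r - 1" and l: "l < p"
    and a1: "2*p \<le> a" and a2: "a < 2*p+2*r-1" and b: "b < p"
  shows "Phi_star p r M (upd_entry Y a b u) $$ (k,l) =
    (\<Sum>j<p. Cf p r M Y k j * N $$ (j,l))
    + (complex_of_real u - complex_of_real (Y $$ (a,b))) * ((if a < 2*p+r then A1 r M k (a-2*p) else \<i> * A2 r M k (a-2*p-r)) * N $$ (b,l))"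
proof -
  let ?Y' = "upd_entry Y a b u"
  let ?\<delta> = "complex_of_real u - complex_of_real (Y $$ (a,b))"
  let ?c = "if a < 2*p+r then A1 r M k (a-2*p) else \<i> * A2 r M k (a-2*p-r)"
  have Y': "?Y' \<in> carrier_mat (2*p+2*r-1) p" by (rule upd_carrier[OF Y])
  have "Zmat p ?Y' = Zmat p Y"
  proof (rule Zmat_cong)
    show "\<forall>i<2*p. \<forall>j<p. ?Y' $$ (i,j) = Y $$ (i,j)"
    proof (intro allI impI)
      fix i j assume i: "i < 2*p" and j: "j < p"
      have "i < dim_row Y" "j < dim_col Y" using i j Y r by auto
      thus "?Y' $$ (i,j) = Y $$ (i,j)" using i a1 by (simp add: upd_index)
    qed
  qed (use Y Y' in auto)
  hence inv': "mat_inverse (Zmat p ?Y') = Some N" using inv by simp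
  have "Phi_star p r M ?Y' $$ (k,l) = (\<Sum>j<p. Cf p r M ?Y' k j * N $$ (j,l))"
    by (rule Phi_star_entry[OF Y' inv' M r k l])
  also have "\<dots> = (\<Sum>j<p. Cf p r M Y k j * N $$ (j,l) + (if j = b then ?\<delta> * ?c * N $$ (b,l) else 0))"
    by (intro sum.cong refl) (simp add: Cf_upd[OF Y a1 a2 b _ r] distrib_right)
  also have "\<dots> = (\<Sum>j<p. Cf p r M Y k j * N $$ (j,l)) + ?\<delta> * (?c * N $$ (b,l))"
    using b by (simp add: sum.distrib)
  finally show ?thesis .
qed

lemma deriv2_lemma:
  fixes f :: "real \<Rightarrow> complex" and G Gd :: "complex \<Rightarrow> complex" and Gdd :: complex
  assumes U: "open U" "t \<in> U" and fG: "\<And>u. u \<in> U \<Longrightarrow> f u = G (of_real u)"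
    and dG: "\<And>u. u \<in> U \<Longrightarrow> (G has_field_derivative Gd (of_real u)) (at (of_real u))"
    and dGd: "(Gd has_field_derivative Gdd) (at (of_real t))"
  shows "\<And>u. u \<in> U \<Longrightarrow> (f has_vector_derivative Gd (of_real u)) (at u)"
    and "((\<lambda>u. vector_derivative f (at u)) has_vector_derivative Gdd) (at t)"
proof -
  show D: "(f has_vector_derivative Gd (of_real u)) (at u)" if u: "u \<in> U" for u
  proof -
    have "((\<lambda>x. G (of_real x)) has_vector_derivative Gd (of_real u)) (at u)"
      by (rule has_vector_derivative_real_field[OF dG[OF u]])
    thus ?thesis
      by (rule has_vector_derivative_transform_within_open[OF _ U(1) u]) (simp add: fG)
  qed
  have "((\<lambda>x. Gd (of_real x)) has_vector_derivative Gdd) (at t)"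
    by (rule has_vector_derivative_real_field[OF dGd])
  thus "((\<lambda>u. vector_derivative f (at u)) has_vector_derivative Gdd) (at t)"
    by (rule has_vector_derivative_transform_within_open[OF _ U]) (simp add: vector_derivative_at[OF D])
qed

lemma open_nz: "open {u::real. 1 + c * (complex_of_real u - complex_of_real t0) * q \<noteq> 0}"
  by (intro open_Collect_neq continuous_intros)

lemma mobius_deriv:
  fixes c R q F t0 z :: complex
  assumes "1 + c * (z - t0) * q \<noteq> 0"
  shows "((\<lambda>z. F - c * (z - t0) * R / (1 + c * (z - t0) * q)) has_field_derivative
      (- c * R / (1 + c * (z - t0) * q)^2)) (at z)"
  using assms by (auto intro!: derivative_eq_intros simp: field_simps power2_eq_square)

lemma mobius_aux: fixes w c R q :: complex assumes "w \<noteq> 0"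
  shows "(0 * w^2 - (- c * R) * (of_nat 2 * (c * q * w ^ (2 - Suc 0)))) / (w^2 * w^2) = 2 * c^2 * R * q / w^3"
  using assms by (simp add: field_simps power2_eq_square power3_eq_cube)

lemma mobius_deriv2:
  fixes c R q t0 z :: complex
  assumes nz: "1 + c * (z - t0) * q \<noteq> 0"
  shows "((\<lambda>z. - c * R / (1 + c * (z - t0) * q)^2) has_field_derivative
      (2 * c^2 * R * q / (1 + c * (z - t0) * q)^3)) (at z)"
proof -
  have d: "((\<lambda>z. 1 + c * (z - t0) * q) has_field_derivative c * q) (at z)"
    by (auto intro!: derivative_eq_intros)
  note d2 = DERIV_power[OF d, of 2]
  note d3 = DERIV_divide[OF DERIV_const[of "- c * R" "at z"] d2]
  have "((\<lambda>z. - c * R / (1 + c * (z - t0) * q)^2) has_field_derivative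
      (0 * (1 + c * (z - t0) * q)^2 - (- c * R) * (of_nat 2 * (c * q * (1 + c * (z - t0) * q) ^ (2 - Suc 0))))
      / ((1 + c * (z - t0) * q)^2 * (1 + c * (z - t0) * q)^2)) (at z)"
    using d3 nz by simp
  thus ?thesis unfolding mobius_aux[OF nz] .
qed

lemma master_Z:
  assumes Y: "Y \<in> carrier_mat (2*p+2*r-1) p" and inv: "mat_inverse (Zmat p Y) = Some N"
    and M: "M \<in> so_C r" and r: "r \<ge> 2" and k: "k < r - 1" and l: "l < p"
    and a: "a < 2*p" and b: "b < p"
  defines "c \<equiv> (if a < p then 1 else \<i>)" and "\<alpha> \<equiv> (if a < p then a else a - p)"
  defines "R \<equiv> (\<Sum>j<p. Cf p r M Y k j * N $$ (j, \<alpha>)) * N $$ (b,l)"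
  defines "f \<equiv> (\<lambda>u. Phi_star p r M (upd_entry Y a b u) $$ (k,l))"
  shows "(f has_vector_derivative (- c * R)) (at (Y $$ (a,b)))"
    and "((\<lambda>t. vector_derivative f (at t)) has_vector_derivative (2 * c^2 * R * N $$ (b,\<alpha>))) (at (Y $$ (a,b)))"
proof -
  define t0 where "t0 = complex_of_real (Y $$ (a,b))"
  define q where "q = N $$ (b,\<alpha>)"
  define F where "F = (\<Sum>j<p. Cf p r M Y k j * N $$ (j,l))"
  define U where "U = {u::real. 1 + c * (complex_of_real u - t0) * q \<noteq> 0}"
  define G where "G = (\<lambda>z. F - c * (z - t0) * R / (1 + c * (z - t0) * q))"
  have U: "open U" "Y $$ (a,b) \<in> U" unfolding U_def t0_def by (auto intro: open_nz)
  have fG: "f u = G (of_real u)" if "u \<in> U" for u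
    using Z_line[OF Y inv M r k l a b, of u] that
    unfolding f_def G_def U_def c_def R_def q_def \<alpha>_def F_def t0_def by (simp add: mult.assoc)
  have dG: "(G has_field_derivative (\<lambda>z. - c * R / (1 + c * (z - t0) * q)^2) (of_real u)) (at (of_real u))"
    if "u \<in> U" for u
    unfolding G_def by (rule mobius_deriv) (use that in \<open>simp add: U_def\<close>)
  have dG1: "((\<lambda>z. - c * R / (1 + c * (z - t0) * q)^2) has_field_derivative
      (2 * c^2 * R * q / (1 + c * (of_real (Y $$ (a,b)) - t0) * q)^3)) (at (of_real (Y $$ (a,b))))"
    by (rule mobius_deriv2) (simp add: t0_def)
  have D1: "(f has_vector_derivative (\<lambda>z. - c * R / (1 + c * (z - t0) * q)^2) (of_real (Y $$ (a,b)))) (at (Y $$ (a,b)))"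
    by (rule deriv2_lemma(1)[where U=U and G=G and Gd="\<lambda>z. - c * R / (1 + c * (z - t0) * q)^2", OF U fG dG dG1 U(2)])
  have D2: "((\<lambda>t. vector_derivative f (at t)) has_vector_derivative (2 * c^2 * R * q / (1 + c * (of_real (Y $$ (a,b)) - t0) * q)^3)) (at (Y $$ (a,b)))"
    by (rule deriv2_lemma(2)[where U=U and G=G and Gd="\<lambda>z. - c * R / (1 + c * (z - t0) * q)^2", OF U fG dG dG1])
  show "(f has_vector_derivative (- c * R)) (at (Y $$ (a,b)))"
    using D1 by (simp add: t0_def)
  show "((\<lambda>t. vector_derivative f (at t)) has_vector_derivative (2 * c^2 * R * N $$ (b,\<alpha>))) (at (Y $$ (a,b)))"
    using D2 by (simp add: t0_def q_def)
qed

lemma master_W: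
  assumes Y: "Y \<in> carrier_mat (2*p+2*r-1) p" and inv: "mat_inverse (Zmat p Y) = Some N"
    and M: "M \<in> so_C r" and r: "r \<ge> 2" and k: "k < r - 1" and l: "l < p"
    and a1: "2*p \<le> a" and a2: "a < 2*p+2*r-1" and b: "b < p"
  defines "E \<equiv> (if a < 2*p+r then A1 r M k (a-2*p) else \<i> * A2 r M k (a-2*p-r)) * N $$ (b,l)"
  defines "f \<equiv> (\<lambda>u. Phi_star p r M (upd_entry Y a b u) $$ (k,l))"
  shows "(f has_vector_derivative E) (at (Y $$ (a,b)))"
    and "((\<lambda>t. vector_derivative f (at t)) has_vector_derivative 0) (at (Y $$ (a,b)))"
proof -
  define t0 where "t0 = complex_of_real (Y $$ (a,b))"
  define F where "F = (\<Sum>j<p. Cf p r M Y k j * N $$ (j,l))"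
  define G where "G = (\<lambda>z. F + (z - t0) * E)"
  have U: "open (UNIV::real set)" "Y $$ (a,b) \<in> UNIV" by auto
  have fG: "f u = G (of_real u)" if "u \<in> UNIV" for u
    using W_line[OF Y inv M r k l a1 a2 b, of u] unfolding f_def G_def E_def F_def t0_def by simp
  have dG: "(G has_field_derivative (\<lambda>z. E) (of_real u)) (at (of_real u))" for u
    unfolding G_def by (auto intro!: derivative_eq_intros)
  have dG1: "((\<lambda>z. E) has_field_derivative 0) (at (of_real (Y $$ (a,b))))"
    by (rule DERIV_const)
  show "(f has_vector_derivative E) (at (Y $$ (a,b)))"
    by (rule deriv2_lemma(1)[where U=UNIV and G=G and Gd="\<lambda>z. E", OF U fG dG dG1 U(2)])
  show "((\<lambda>t. vector_derivative f (at t)) has_vector_derivative 0) (at (Y $$ (a,b)))"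
    by (rule deriv2_lemma(2)[where U=UNIV and G=G and Gd="\<lambda>z. E", OF U fG dG dG1])
qed

lemma skew_id:
  fixes s1 s2 :: "nat \<Rightarrow> complex"
  assumes m: "\<And>a c. a < r \<Longrightarrow> c < r \<Longrightarrow> m a c = - m c a"
  shows "(\<Sum>a<r. (s1 a + (\<Sum>c<r. s1 c * m c a)) * (s2 a + (\<Sum>c<r. s2 c * m c a)))
       = (\<Sum>a<r. (s1 a - (\<Sum>c<r. s1 c * m c a)) * (s2 a - (\<Sum>c<r. s2 c * m c a)))"
proof -
  let ?T1 = "\<lambda>a. (\<Sum>c<r. s1 c * m c a)" and ?T2 = "\<lambda>a. (\<Sum>c<r. s2 c * m c a)"
  have X: "(\<Sum>a<r. ?T1 a * s2 a) = - (\<Sum>a<r. s1 a * ?T2 a)"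
  proof -
    have "(\<Sum>a<r. ?T1 a * s2 a) = (\<Sum>a<r. \<Sum>c<r. s1 c * m c a * s2 a)"
      by (simp add: sum_distrib_right)
    also have "\<dots> = (\<Sum>c<r. \<Sum>a<r. s1 c * m c a * s2 a)" by (rule sum.swap)
    also have "\<dots> = (\<Sum>c<r. \<Sum>a<r. - (s1 c * s2 a * m a c))"
    proof (intro sum.cong refl)
      fix c a assume c: "c \<in> {..<r}" and a: "a \<in> {..<r}"
      have e: "m c a = - m a c" by (rule m) (use a c in auto)
      show "s1 c * m c a * s2 a = - (s1 c * s2 a * m a c)" unfolding e by simp
    qed
    also have "\<dots> = - (\<Sum>a<r. s1 a * ?T2 a)"
      by (simp add: sum_distrib_left sum_negf mult.assoc)
    finally show ?thesis .
  qed
  have pw: "(x1+x2)*(x3+x4) = (x1-x2)*(x3-x4) + (2*(x1*x4) + 2*(x2*x3))" for x1 x2 x3 x4 :: complex by (simp add: algebra_simps)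
  have "(\<Sum>a<r. (s1 a + ?T1 a) * (s2 a + ?T2 a)) = (\<Sum>a<r. (s1 a - ?T1 a) * (s2 a - ?T2 a) + (2 * (s1 a * ?T2 a) + 2 * (?T1 a * s2 a)))"
    by (rule sum.cong[OF refl]) (rule pw)
  also have "\<dots> = (\<Sum>a<r. (s1 a - ?T1 a) * (s2 a - ?T2 a)) + (2 * (\<Sum>a<r. s1 a * ?T2 a) + 2 * (\<Sum>a<r. ?T1 a * s2 a))"
    by (simp only: sum.distrib sum_distrib_left)
  also have "2 * (\<Sum>a<r. s1 a * ?T2 a) + 2 * (\<Sum>a<r. ?T1 a * s2 a) = 0" unfolding X by simp
  finally show ?thesis by simp
qed

lemma sum_split3:
  fixes h :: "nat \<Rightarrow> 'a::comm_monoid_add"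
  assumes "2*p \<le> n"
  shows "(\<Sum>a<n. h a) = (\<Sum>a<p. h a) + (\<Sum>a<p. h (a+p)) + (\<Sum>a<n-2*p. h (a+2*p))"
proof -
  have e1: "sum h {0..<2*p} + sum h {2*p..<n} = sum h {0..<n}"
    by (rule sum.atLeastLessThan_concat) (use assms in auto)
  have e2: "sum h {0..<p} + sum h {p..<2*p} = sum h {0..<2*p}"
    by (rule sum.atLeastLessThan_concat) auto
  have e3: "sum h {p..<2*p} = (\<Sum>a<p. h (a+p))"
    using sum.shift_bounds_nat_ivl[of h 0 p p] by (simp add: atLeast0LessThan mult_2)
  have e4: "sum h {2*p..<n} = (\<Sum>a<n-2*p. h (a+2*p))"
    using sum.shift_bounds_nat_ivl[of h 0 "2*p" "n-2*p"] assms by (simp add: atLeast0LessThan)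
  have "(\<Sum>a<n. h a) = sum h {0..<n}" by (simp add: atLeast0LessThan)
  also have "\<dots> = sum h {0..<p} + sum h {p..<2*p} + sum h {2*p..<n}" using e1 e2 by simp
  also have "\<dots> = (\<Sum>a<p. h a) + (\<Sum>a<p. h (a+p)) + (\<Sum>a<n-2*p. h (a+2*p))"
    unfolding e3 e4 by (simp add: atLeast0LessThan)
  finally show ?thesis .
qed

lemma sum_split2:
  fixes h :: "nat \<Rightarrow> 'a::comm_monoid_add"
  assumes "r \<ge> 1"
  shows "(\<Sum>a<2*r-1. h a) = (\<Sum>a<r. h a) + (\<Sum>a<r-1. h (a+r))"
proof -
  have "(\<Sum>a<2*r-1. h a) = sum h {0..<r} + sum h {r..<2*r-1}"
    using assms by (simp add: atLeast0LessThan[symmetric] sum.atLeastLessThan_concat)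
  also have "sum h {r..<2*r-1} = (\<Sum>a<r-1. h (a+r))"
    using sum.shift_bounds_nat_ivl[of h 0 r "r-1"] assms by (simp add: atLeast0LessThan mult_2)
  finally show ?thesis by (simp add: atLeast0LessThan)
qed

lemma pderiv_vals:
  assumes Y: "Y \<in> carrier_mat (2*p+2*r-1) p" and inv: "mat_inverse (Zmat p Y) = Some N"
    and M: "M \<in> so_C r" and r: "r \<ge> 2" and k: "k < r - 1" and l: "l < p"
    and a: "a < 2*p+2*r-1" and b: "b < p"
  defines "\<phi> \<equiv> (\<lambda>Y. Phi_star p r M Y $$ (k,l))"
  defines "P \<equiv> (\<lambda>\<alpha>. \<Sum>j<p. Cf p r M Y k j * N $$ (j,\<alpha>))"
  shows "pderiv_entry \<phi> Y a b = (if a < p then - (P a * N $$ (b,l)) else if a < 2*p then - (\<i> * (P (a-p) * N $$ (b,l)))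
          else (if a < 2*p+r then A1 r M k (a-2*p) else \<i> * A2 r M k (a-2*p-r)) * N $$ (b,l))"
    and "pderiv2_entry \<phi> Y a b = (if a < p then 2 * (P a * N $$ (b,l)) * N $$ (b,a)
          else if a < 2*p then - (2 * (P (a-p) * N $$ (b,l)) * N $$ (b,a-p)) else 0)"
    and "(\<lambda>t. pderiv_entry \<phi> (upd_entry Y a b t) a b) differentiable (at (Y $$ (a,b)))"
    and "(\<lambda>u. \<phi> (upd_entry Y a b u)) differentiable (at (Y $$ (a,b)))"
proof -
  define f where "f = (\<lambda>u. Phi_star p r M (upd_entry Y a b u) $$ (k,l))"
  have dY: "a < dim_row Y" "b < dim_col Y" using Y a b by auto
  have pd_eq: "(\<lambda>t. pderiv_entry \<phi> (upd_entry Y a b t) a b) = (\<lambda>t. vector_derivative f (at t))"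
    by (rule ext) (simp add: pderiv_entry_def upd_upd[OF dY] upd_self[OF dY] f_def \<phi>_def)
  have pd: "pderiv_entry \<phi> Y a b = vector_derivative f (at (Y $$ (a,b)))"
    by (simp add: pderiv_entry_def f_def \<phi>_def)
  have pd2: "pderiv2_entry \<phi> Y a b = vector_derivative (\<lambda>t. vector_derivative f (at t)) (at (Y $$ (a,b)))"
    unfolding pderiv2_entry_def pd_eq ..
  have fu: "(\<lambda>u. \<phi> (upd_entry Y a b u)) = f" by (simp add: f_def \<phi>_def)
  show "pderiv_entry \<phi> Y a b = (if a < p then - (P a * N $$ (b,l)) else if a < 2*p then - (\<i> * (P (a-p) * N $$ (b,l)))
          else (if a < 2*p+r then A1 r M k (a-2*p) else \<i> * A2 r M k (a-2*p-r)) * N $$ (b,l))"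
   and "pderiv2_entry \<phi> Y a b = (if a < p then 2 * (P a * N $$ (b,l)) * N $$ (b,a)
          else if a < 2*p then - (2 * (P (a-p) * N $$ (b,l)) * N $$ (b,a-p)) else 0)"
   and "(\<lambda>t. pderiv_entry \<phi> (upd_entry Y a b t) a b) differentiable (at (Y $$ (a,b)))"
   and "(\<lambda>u. \<phi> (upd_entry Y a b u)) differentiable (at (Y $$ (a,b)))"
  proof -
    consider (Z) "a < 2*p" | (W) "2*p \<le> a" by linarith
    then have "pderiv_entry \<phi> Y a b = (if a < p then - (P a * N $$ (b,l)) else if a < 2*p then - (\<i> * (P (a-p) * N $$ (b,l)))
          else (if a < 2*p+r then A1 r M k (a-2*p) else \<i> * A2 r M k (a-2*p-r)) * N $$ (b,l))
     \<and> pderiv2_entry \<phi> Y a b = (if a < p then 2 * (P a * N $$ (b,l)) * N $$ (b,a)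
          else if a < 2*p then - (2 * (P (a-p) * N $$ (b,l)) * N $$ (b,a-p)) else 0)
     \<and> (\<lambda>t. pderiv_entry \<phi> (upd_entry Y a b t) a b) differentiable (at (Y $$ (a,b)))
     \<and> (\<lambda>u. \<phi> (upd_entry Y a b u)) differentiable (at (Y $$ (a,b)))"
    proof cases
      case Z
      note H = master_Z[OF Y inv M r k l Z b]
      have H1: "(f has_vector_derivative (- (if a < p then 1 else \<i>) * ((P (if a < p then a else a - p)) * N $$ (b,l)))) (at (Y $$ (a,b)))"
        using H(1) unfolding f_def P_def .
      have H2: "((\<lambda>t. vector_derivative f (at t)) has_vector_derivative
          (2 * (if a < p then 1 else \<i>)^2 * ((P (if a < p then a else a - p)) * N $$ (b,l)) * N $$ (b, if a < p then a else a - p))) (at (Y $$ (a,b)))"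
        using H(2) unfolding f_def P_def .
      show ?thesis
        unfolding pd pd2 vector_derivative_at[OF H1] vector_derivative_at[OF H2] pd_eq fu
        using Z H1 H2 by (auto intro: differentiableI_vector)
    next
      case W
      note H = master_W[OF Y inv M r k l W a b]
      have H1: "(f has_vector_derivative ((if a < 2*p+r then A1 r M k (a-2*p) else \<i> * A2 r M k (a-2*p-r)) * N $$ (b,l))) (at (Y $$ (a,b)))"
        using H(1) unfolding f_def .
      have H2: "((\<lambda>t. vector_derivative f (at t)) has_vector_derivative 0) (at (Y $$ (a,b)))"
        using H(2) unfolding f_def .
      show ?thesis
        unfolding pd pd2 vector_derivative_at[OF H1] vector_derivative_at[OF H2] pd_eq fu
        using W H1 H2 by (auto intro: differentiableI_vector)
    qed
    thus "pderiv_entry \<phi> Y a b = (if a < p then - (P a * N $$ (b,l)) else if a < 2*p then - (\<i> * (P (a-p) * N $$ (b,l)))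
          else (if a < 2*p+r then A1 r M k (a-2*p) else \<i> * A2 r M k (a-2*p-r)) * N $$ (b,l))"
     and "pderiv2_entry \<phi> Y a b = (if a < p then 2 * (P a * N $$ (b,l)) * N $$ (b,a)
          else if a < 2*p then - (2 * (P (a-p) * N $$ (b,l)) * N $$ (b,a-p)) else 0)"
     and "(\<lambda>t. pderiv_entry \<phi> (upd_entry Y a b t) a b) differentiable (at (Y $$ (a,b)))"
     and "(\<lambda>u. \<phi> (upd_entry Y a b u)) differentiable (at (Y $$ (a,b)))" by auto
  qed
qed

lemma cmat_mult: "A \<in> carrier_mat m n \<Longrightarrow> B \<in> carrier_mat n q \<Longrightarrow> cmat (A * B) = cmat A * cmat B"
  by (rule eq_matI) (auto simp: cmat_def scalar_prod_def)

lemma cmat_one: "cmat (1\<^sub>m n) = 1\<^sub>m n"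
  by (rule eq_matI) (auto simp: cmat_def)

lemma Zmat_mult:
  assumes Y: "Y \<in> carrier_mat m p" and g: "g \<in> carrier_mat p p" and m: "2*p \<le> m"
  shows "Zmat p (Y * g) = Zmat p Y * cmat g"
proof (rule eq_matI)
  fix i j assume i: "i < dim_row (Zmat p Y * cmat g)" and j: "j < dim_col (Zmat p Y * cmat g)"
  hence i: "i < p" and j: "j < p" using g Zmat_carrier[of p Y] by (auto simp: cmat_def)
  have "Zmat p (Y * g) $$ (i,j) = complex_of_real ((Y*g) $$ (i,j)) + \<i> * complex_of_real ((Y*g) $$ (p+i,j))"
    by (rule Zmat_index[OF i]) (use j g in auto)
  also have "\<dots> = complex_of_real (\<Sum>c<p. Y $$ (i,c) * g $$ (c,j)) + \<i> * complex_of_real (\<Sum>c<p. Y $$ (p+i,c) * g $$ (c,j))"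
    using mult_entry[OF Y g, of i j] mult_entry[OF Y g, of "p+i" j] i j m by simp
  also have "\<dots> = (\<Sum>c<p. Zmat p Y $$ (i,c) * cmat g $$ (c,j))"
    using i j Y g by (simp add: Zmat_index cmat_def sum.distrib sum_distrib_left algebra_simps)
  also have "\<dots> = (Zmat p Y * cmat g) $$ (i,j)"
    by (rule mult_entry[symmetric]) (use Zmat_carrier[of p Y] Y g i j in \<open>auto simp: cmat_def\<close>)
  finally show "Zmat p (Y * g) $$ (i,j) = (Zmat p Y * cmat g) $$ (i,j)" .
qed (use g Zmat_carrier[of p Y] Zmat_carrier[of p "Y*g"] Y in \<open>auto simp: cmat_def\<close>)

lemma gen_distrib: fixes c :: complex shows "c * (\<Sum>i\<in>A. f i * h i) = (\<Sum>i\<in>A. (c * f i) * h i)"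
  by (simp add: sum_distrib_left mult.assoc)

lemma Cf_mult:
  assumes Y: "Y \<in> carrier_mat (2*p+2*r-1) p" and g: "g \<in> carrier_mat p p" and j: "j < p" and r: "r \<ge> 2"
  shows "Cf p r M (Y * g) k j = (\<Sum>i<p. Cf p r M Y k i * complex_of_real (g $$ (i,j)))"
proof -
  have e: "complex_of_real ((Y*g) $$ (m,j)) = (\<Sum>i<p. complex_of_real (Y $$ (m,i)) * complex_of_real (g $$ (i,j)))"
    if "m < 2*p+2*r-1" for m
    using mult_entry[OF Y g that j] by simp
  have "Cf p r M (Y * g) k j = (\<Sum>a<r. A1 r M k a * (\<Sum>i<p. complex_of_real (Y $$ (2*p+a,i)) * complex_of_real (g $$ (i,j))))
     + \<i> * (\<Sum>a<r-1. A2 r M k a * (\<Sum>i<p. complex_of_real (Y $$ (2*p+r+a,i)) * complex_of_real (g $$ (i,j))))"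
    unfolding Cf_def using r by (intro arg_cong2[where f="(+)"] arg_cong2[where f="(*)"] refl sum.cong) (auto simp: e)
  also have "\<dots> = (\<Sum>i<p. (\<Sum>a<r. A1 r M k a * complex_of_real (Y $$ (2*p+a,i))) * complex_of_real (g $$ (i,j)))
     + \<i> * (\<Sum>i<p. (\<Sum>a<r-1. A2 r M k a * complex_of_real (Y $$ (2*p+r+a,i))) * complex_of_real (g $$ (i,j)))"
    by (simp add: sum_distrib_left sum_distrib_right mult.assoc sum.swap[of _ "{..<p}"])
  also have "\<i> * (\<Sum>i<p. (\<Sum>a<r-1. A2 r M k a * complex_of_real (Y $$ (2*p+r+a,i))) * complex_of_real (g $$ (i,j)))
     = (\<Sum>i<p. (\<i> * (\<Sum>a<r-1. A2 r M k a * complex_of_real (Y $$ (2*p+r+a,i)))) * complex_of_real (g $$ (i,j)))"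
    by (rule gen_distrib)
  also have "(\<Sum>i<p. (\<Sum>a<r. A1 r M k a * complex_of_real (Y $$ (2*p+a,i))) * complex_of_real (g $$ (i,j))) + \<dots>
     = (\<Sum>i<p. Cf p r M Y k i * complex_of_real (g $$ (i,j)))"
    unfolding Cf_def by (simp only: distrib_right sum.distrib)
  finally show ?thesis .
qed

lemma assoc3: "A \<in> carrier_mat m p \<Longrightarrow> B \<in> carrier_mat p p \<Longrightarrow> C \<in> carrier_mat p q \<Longrightarrow> A * B * C = A * (B * C)"
  by (rule assoc_mult_mat) auto

lemma GL_entry:
  assumes Y: "Y \<in> carrier_mat (2*p+2*r-1) p" and d: "det (Zmat p Y) \<noteq> 0"
    and g: "g \<in> carrier_mat p p" and ig: "invertible_mat g"
    and M: "M \<in> so_C r" and r: "r \<ge> 2" and k: "k < r - 1" and l: "l < p"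
  shows "Phi_star p r M (Y * g) $$ (k,l) = Phi_star p r M Y $$ (k,l)"
proof -
  have Zc: "Zmat p Y \<in> carrier_mat p p" using Zmat_carrier[of p Y] Y by auto
  obtain N where inv: "mat_inverse (Zmat p Y) = Some N" and ZN: "Zmat p Y * N = 1\<^sub>m p" and Nc: "N \<in> carrier_mat p p"
    using det_inv[OF Zc d] by auto
  obtain g' where gg': "g * g' = 1\<^sub>m p" and g'c: "g' \<in> carrier_mat p p"
  proof -
    from ig obtain B where B1: "g * B = 1\<^sub>m (dim_row g)" and B2: "B * g = 1\<^sub>m (dim_row B)"
      unfolding invertible_mat_def inverts_mat_def by auto
    have "dim_col B = p" using arg_cong[OF B1, of dim_col] g by simp
    moreover have "dim_row B = p" using arg_cong[OF B2, of dim_col] g by simp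
    ultimately have Bc: "B \<in> carrier_mat p p" unfolding carrier_mat_def by blast
    have "g * B = 1\<^sub>m p" using B1 g by simp
    from that[OF this Bc] show ?thesis .
  qed
  define G where "G = cmat g"
  define G' where "G' = cmat g'"
  have Gc: "G \<in> carrier_mat p p" and G'c: "G' \<in> carrier_mat p p" using g g'c by (auto simp: G_def G'_def cmat_def)
  have GG': "G * G' = 1\<^sub>m p" unfolding G_def G'_def cmat_mult[OF g g'c, symmetric] gg' cmat_one ..
  have Yg: "Y * g \<in> carrier_mat (2*p+2*r-1) p" using Y g by auto
  have Zg: "Zmat p (Y * g) = Zmat p Y * G" unfolding G_def by (rule Zmat_mult[OF Y g]) (use r in auto)
  have "Zmat p (Y * g) * (G' * N) = Zmat p Y * (G * (G' * N))"
    unfolding Zg by (rule assoc3[OF Zc Gc mult_carrier_mat[OF G'c Nc]])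
  also have "\<dots> = Zmat p Y * ((G * G') * N)" by (simp add: assoc3[OF Gc G'c Nc])
  also have "\<dots> = 1\<^sub>m p" unfolding GG' using Nc ZN by simp
  finally have inv': "mat_inverse (Zmat p (Y * g)) = Some (G' * N)"
    using inv_unique[of "Zmat p (Y * g)" p "G' * N"] Zmat_carrier[of p "Y*g"] Yg G'c Nc by auto
  define Cm where "Cm = mat 1 p (\<lambda>(_,j). Cf p r M Y k j)"
  have Cmc: "Cm \<in> carrier_mat 1 p" by (simp add: Cm_def)
  have e1: "Cf p r M (Y * g) k j = (Cm * G) $$ (0,j)" if j: "j < p" for j
  proof -
    have "(Cm * G) $$ (0,j) = (\<Sum>i<p. Cm $$ (0,i) * G $$ (i,j))" by (rule mult_entry[OF Cmc Gc _ j]) simp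
    also have "\<dots> = (\<Sum>i<p. Cf p r M Y k i * complex_of_real (g $$ (i, j)))"
      using j g by (intro sum.cong refl) (simp add: Cm_def G_def cmat_def)
    finally show ?thesis using Cf_mult[OF Y g j r] by simp
  qed
  have "Phi_star p r M (Y * g) $$ (k,l) = (\<Sum>j<p. Cf p r M (Y*g) k j * (G' * N) $$ (j,l))"
    by (rule Phi_star_entry[OF Yg inv' M r k l])
  also have "\<dots> = (\<Sum>j<p. (Cm * G) $$ (0,j) * (G' * N) $$ (j,l))" using e1 by simp
  also have "\<dots> = ((Cm * G) * (G' * N)) $$ (0,l)"
    by (rule mult_entry[symmetric]) (use Cmc Gc G'c Nc l in auto)
  also have "(Cm * G) * (G' * N) = Cm * N"
  proof -
    have "(Cm * G) * (G' * N) = Cm * (G * (G' * N))" by (rule assoc3[OF Cmc Gc mult_carrier_mat[OF G'c Nc]])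
    also have "\<dots> = Cm * ((G * G') * N)" by (simp add: assoc3[OF Gc G'c Nc])
    also have "\<dots> = Cm * N" unfolding GG' using Nc by simp
    finally show ?thesis .
  qed
  also have "(Cm * N) $$ (0,l) = (\<Sum>j<p. Cm $$ (0,j) * N $$ (j,l))"
    by (rule mult_entry[OF Cmc Nc _ l]) simp
  also have "\<dots> = (\<Sum>j<p. Cf p r M Y k j * N $$ (j,l))" by (simp add: Cm_def)
  also have "\<dots> = Phi_star p r M Y $$ (k,l)" by (rule Phi_star_entry[OF Y inv M r k l, symmetric])
  finally show ?thesis .
qed

lemma tau_zero:
  assumes Y: "Y \<in> carrier_mat (2*p+2*r-1) p" and inv: "mat_inverse (Zmat p Y) = Some N"
    and M: "M \<in> so_C r" and r: "r \<ge> 2" and k: "k < r - 1" and l: "l < p"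
  shows "tau_eucl (\<lambda>Y. Phi_star p r M Y $$ (k,l)) Y = 0"
proof -
  define \<phi> where "\<phi> = (\<lambda>Y. Phi_star p r M Y $$ (k,l))"
  define P where "P = (\<lambda>\<alpha>. \<Sum>j<p. Cf p r M Y k j * N $$ (j,\<alpha>))"
  define h where "h = (\<lambda>a. \<Sum>b<p. pderiv2_entry \<phi> Y a b)"
  have h1: "h a + h (a+p) = 0" if a: "a < p" for a
  proof -
    have "h a = (\<Sum>b<p. 2 * (P a * N $$ (b,l)) * N $$ (b,a))"
      unfolding h_def using a r
      by (intro sum.cong refl) (simp add: pderiv_vals(2)[OF Y inv M r k l, folded \<phi>_def] P_def)
    moreover have "h (a+p) = (\<Sum>b<p. - (2 * (P a * N $$ (b,l)) * N $$ (b,a)))"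
      unfolding h_def using a r
      by (intro sum.cong refl) (simp add: pderiv_vals(2)[OF Y inv M r k l, folded \<phi>_def] P_def)
    ultimately show ?thesis by (simp add: sum_negf)
  qed
  have h3: "h (a + 2*p) = 0" if a: "a < 2*p+2*r-1 - 2*p" for a
    unfolding h_def using a r
    by (intro sum.neutral ballI) (simp add: pderiv_vals(2)[OF Y inv M r k l, folded \<phi>_def] P_def)
  have "tau_eucl \<phi> Y = (\<Sum>a<2*p+2*r-1. h a)" using Y by (simp add: tau_eucl_def h_def)
  also have "\<dots> = (\<Sum>a<p. h a) + (\<Sum>a<p. h (a+p)) + (\<Sum>a<2*p+2*r-1-2*p. h (a+2*p))"
    by (rule sum_split3) (use r in simp)
  also have "\<dots> = 0" using h1 h3 by (simp add: sum.distrib[symmetric])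
  finally show ?thesis unfolding \<phi>_def .
qed

lemma A_key:
  assumes M: "M \<in> so_C r" and r: "r \<ge> 2" and k: "k < r - 1" and k': "k' < r - 1"
  shows "(\<Sum>a<r. A1 r M k a * A1 r M k' a) = (\<Sum>a<r-1. A2 r M k a * A2 r M k' a)"
proof -
  have Mc: "M \<in> carrier_mat r r" and T: "transpose_mat M = - M" using M by (auto simp: so_C_def)
  have m: "M $$ (a,c) = - M $$ (c,a)" if "a < r" "c < r" for a c
    using arg_cong[OF T, of "\<lambda>A. A $$ (c,a)"] Mc that by auto
  have "(\<Sum>a<r. A1 r M k a * A1 r M k' a) = (\<Sum>a<r. A2 r M k a * A2 r M k' a)"
    unfolding A1_def A2_def by (rule skew_id[where m = "\<lambda>c a. M $$ (c,a)"]) (rule m)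
  also have "\<dots> = (\<Sum>a<r-1. A2 r M k a * A2 r M k' a)"
  proof -
    have "{..<r} = insert (r-1) {..<r-1}" using r by auto
    thus ?thesis using A2_last[OF M r k] by simp
  qed
  finally show ?thesis .
qed

lemma ii1: fixes X Z :: complex shows "\<i> * X * (\<i> * Z) = - (X * Z)"
  by (simp add: algebra_simps)

lemma ii2: fixes u w x y :: complex shows "\<i> * u * x * (\<i> * w * y) = - (u * w * (x * y))"
  by (simp add: algebra_simps)

lemma kappa_zero:
  assumes Y: "Y \<in> carrier_mat (2*p+2*r-1) p" and inv: "mat_inverse (Zmat p Y) = Some N"
    and M: "M \<in> so_C r" and r: "r \<ge> 2" and k: "k < r - 1" and l: "l < p" and k': "k' < r - 1" and l': "l' < p"
  shows "kappa_eucl (\<lambda>Y. Phi_star p r M Y $$ (k,l)) (\<lambda>Y. Phi_star p r M Y $$ (k',l')) Y = 0"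
proof -
  define \<phi> where "\<phi> = (\<lambda>Y. Phi_star p r M Y $$ (k,l))"
  define \<psi> where "\<psi> = (\<lambda>Y. Phi_star p r M Y $$ (k',l'))"
  define P where "P = (\<lambda>\<alpha>. \<Sum>j<p. Cf p r M Y k j * N $$ (j,\<alpha>))"
  define P' where "P' = (\<lambda>\<alpha>. \<Sum>j<p. Cf p r M Y k' j * N $$ (j,\<alpha>))"
  define NN where "NN = (\<Sum>b<p. N $$ (b,l) * N $$ (b,l'))"
  define h where "h = (\<lambda>a. \<Sum>b<p. pderiv_entry \<phi> Y a b * pderiv_entry \<psi> Y a b)"
  note V = pderiv_vals(1)[OF Y inv M r k l, folded \<phi>_def] pderiv_vals(1)[OF Y inv M r k' l', folded \<psi>_def]
  have h1: "h a + h (a+p) = 0" if a: "a < p" for a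
  proof -
    have "h a = (\<Sum>b<p. (P a * N $$ (b,l)) * (P' a * N $$ (b,l')))"
      unfolding h_def using a r by (intro sum.cong refl) (simp add: V P_def P'_def)
    moreover have "h (a+p) = (\<Sum>b<p. - ((P a * N $$ (b,l)) * (P' a * N $$ (b,l'))))"
      unfolding h_def using a r by (intro sum.cong refl) (simp add: V P_def P'_def ii1)
    ultimately show ?thesis by (simp add: sum_negf)
  qed
  have h2: "h (a + 2*p) = A1 r M k a * A1 r M k' a * NN" if a: "a < r" for a
  proof -
    have "h (a + 2*p) = (\<Sum>b<p. A1 r M k a * A1 r M k' a * (N $$ (b,l) * N $$ (b,l')))"
      unfolding h_def using a r by (intro sum.cong refl) (simp add: V)
    thus ?thesis by (simp add: NN_def sum_distrib_left)
  qed
  have h3: "h (a + r + 2*p) = - (A2 r M k a * A2 r M k' a * NN)" if a: "a < r - 1" for a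
  proof -
    have "h (a + r + 2*p) = (\<Sum>b<p. - (A2 r M k a * A2 r M k' a * (N $$ (b,l) * N $$ (b,l'))))"
      unfolding h_def using a r by (intro sum.cong refl) (simp add: V ii2)
    thus ?thesis by (simp add: NN_def sum_distrib_left sum_negf)
  qed
  have "kappa_eucl \<phi> \<psi> Y = (\<Sum>a<2*p+2*r-1. h a)" using Y by (simp add: kappa_eucl_def h_def)
  also have "\<dots> = (\<Sum>a<p. h a) + (\<Sum>a<p. h (a+p)) + (\<Sum>a<2*p+2*r-1-2*p. h (a+2*p))"
    by (rule sum_split3) (use r in simp)
  also have "(\<Sum>a<p. h a) + (\<Sum>a<p. h (a+p)) = 0" using h1 by (simp add: sum.distrib[symmetric])
  also have "2*p+2*r-1-2*p = 2*r-1" by simp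
  also have "(\<Sum>a<2*r-1. h (a+2*p)) = (\<Sum>a<r. h (a+2*p)) + (\<Sum>a<r-1. h (a+r+2*p))"
    using sum_split2[of r "\<lambda>a. h (a+2*p)"] r by (simp add: add.assoc)
  also have "\<dots> = NN * ((\<Sum>a<r. A1 r M k a * A1 r M k' a) - (\<Sum>a<r-1. A2 r M k a * A2 r M k' a))"
    using h2 h3 by (simp add: sum_negf sum_distrib_left right_diff_distrib algebra_simps)
  also have "\<dots> = 0" using A_key[OF M r k k'] by simp
  finally show ?thesis unfolding \<phi>_def \<psi>_def by simp
qed

lemma D_props:
  assumes s: "s = p + 2*r" and r: "r \<ge> 2" and Y: "Y \<in> V_star_del p s"
  shows "Y \<in> carrier_mat (2*p+2*r-1) p" "det (Zmat p Y) \<noteq> 0"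
proof -
  obtain X where X: "X \<in> V_star p s" and YX: "Y = delete_last_row X"
    using Y by (auto simp: V_star_del_def)
  note cX = Vstar_props(1)[OF X]
  show Yc: "Y \<in> carrier_mat (2*p+2*r-1) p" using cX s unfolding YX by (simp add: delete_last_row_def)
  have "Zmat p Y = Zmat p X"
  proof (rule Zmat_cong)
    show "\<forall>i<2*p. \<forall>j<p. Y $$ (i,j) = X $$ (i,j)"
    proof (intro allI impI)
      fix i j assume i: "i < 2*p" and j: "j < p"
      show "Y $$ (i,j) = X $$ (i,j)" unfolding YX using cX s i j r by (simp add: delete_last_row_index)
    qed
  qed (use Yc cX in auto)
  thus "det (Zmat p Y) \<noteq> 0" using Vstar_props(2)[OF X] by simp
qed

theorem proposition9p3:
  fixes p r s :: nat and M :: "complex mat"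
  assumes "p > 0" and "r \<ge> 2" and "s = p + 2 * r" and "M \<in> so_C r"
  shows "(\<forall>X\<in>V_star p s. \<forall>X'\<in>V_star p s.
            delete_last_row X = delete_last_row X' \<longrightarrow> Phi_hat p r M X = Phi_hat p r M X')
    \<and> (\<forall>X\<in>V_star p s. Phi_star p r M (delete_last_row X) = Phi_hat p r M X)
    \<and> (let \<Omega> = {(\<lambda>Y. Phi_star p r M Y $$ (k, l)) | k l. k < r - 1 \<and> l < p}
       in orthogonal_harmonic_family (V_star_del p s) \<Omega>
          \<and> (\<forall>\<phi>\<in>\<Omega>. GL_invariant_on p (V_star_del p s) \<phi>))"
proof -
  note r = assms(2) and s = assms(3) and M = assms(4)
  let ?D = "V_star_del p s"
  let ?\<Omega> = "{(\<lambda>Y. Phi_star p r M Y $$ (k, l)) | k l. k < r - 1 \<and> l < p}"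
  have Dinv: "\<exists>N. mat_inverse (Zmat p Y) = Some N" if "Y \<in> ?D" for Y
    using det_inv[OF _ D_props(2)[OF s r that]] Zmat_carrier[of p Y] D_props(1)[OF s r that] by auto
  have twice: "twice_coord_diff_on ?D (\<lambda>Y. Phi_star p r M Y $$ (k, l))" if k: "k < r - 1" and l: "l < p" for k l
    unfolding twice_coord_diff_on_def
  proof (intro ballI allI impI conjI)
    fix X a b assume X: "X \<in> ?D" and a: "a < dim_row X" and b: "b < dim_col X"
    have Xc: "X \<in> carrier_mat (2*p+2*r-1) p" by (rule D_props(1)[OF s r X])
    have a': "a < 2*p+2*r-1" and b': "b < p" using a b Xc by auto
    obtain N where inv: "mat_inverse (Zmat p X) = Some N" using Dinv[OF X] by auto
    show "(\<lambda>t. pderiv_entry (\<lambda>Y. Phi_star p r M Y $$ (k, l)) (upd_entry X a b t) a b) differentiable (at (X $$ (a,b)))"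
      by (rule pderiv_vals(3)[OF Xc inv M r k l a' b'])
    fix t assume t: "upd_entry X a b t \<in> ?D"
    have Yc: "upd_entry X a b t \<in> carrier_mat (2*p+2*r-1) p" by (rule D_props(1)[OF s r t])
    obtain N' where inv': "mat_inverse (Zmat p (upd_entry X a b t)) = Some N'" using Dinv[OF t] by auto
    have "(\<lambda>u. Phi_star p r M (upd_entry (upd_entry X a b t) a b u) $$ (k, l)) differentiable (at (upd_entry X a b t $$ (a,b)))"
      by (rule pderiv_vals(4)[OF Yc inv' M r k l a' b'])
    thus "(\<lambda>u. Phi_star p r M (upd_entry X a b u) $$ (k, l)) differentiable (at t)"
      by (simp add: upd_upd[OF a b] upd_self[OF a b])
  qed
  have ohf: "orthogonal_harmonic_family ?D ?\<Omega>"
    unfolding orthogonal_harmonic_family_def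
  proof (intro conjI ballI)
    fix \<phi> assume "\<phi> \<in> ?\<Omega>"
    then obtain k l where k: "k < r - 1" and l: "l < p" and \<phi>: "\<phi> = (\<lambda>Y. Phi_star p r M Y $$ (k, l))" by auto
    show "twice_coord_diff_on ?D \<phi>" unfolding \<phi> by (rule twice[OF k l])
    fix X assume X: "X \<in> ?D"
    obtain N where inv: "mat_inverse (Zmat p X) = Some N" using Dinv[OF X] by auto
    show "tau_eucl \<phi> X = 0" unfolding \<phi> by (rule tau_zero[OF D_props(1)[OF s r X] inv M r k l])
  next
    fix \<phi> \<psi> X assume "\<phi> \<in> ?\<Omega>" "\<psi> \<in> ?\<Omega>" and X: "X \<in> ?D"
    then obtain k l k' l' where k: "k < r - 1" and l: "l < p" and \<phi>: "\<phi> = (\<lambda>Y. Phi_star p r M Y $$ (k, l))"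
      and k': "k' < r - 1" and l': "l' < p" and \<psi>: "\<psi> = (\<lambda>Y. Phi_star p r M Y $$ (k', l'))" by blast
    obtain N where inv: "mat_inverse (Zmat p X) = Some N" using Dinv[OF X] by auto
    show "kappa_eucl \<phi> \<psi> X = 0" unfolding \<phi> \<psi> by (rule kappa_zero[OF D_props(1)[OF s r X] inv M r k l k' l'])
  qed
  have gl: "\<forall>\<phi>\<in>?\<Omega>. GL_invariant_on p ?D \<phi>"
  proof
    fix \<phi> assume "\<phi> \<in> ?\<Omega>"
    then obtain k l where k: "k < r - 1" and l: "l < p" and \<phi>: "\<phi> = (\<lambda>Y. Phi_star p r M Y $$ (k, l))" by auto
    show "GL_invariant_on p ?D \<phi>" unfolding GL_invariant_on_def \<phi>
    proof (intro ballI allI impI)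
      fix X and g :: "real mat" assume X: "X \<in> ?D" and g: "g \<in> carrier_mat p p \<and> invertible_mat g"
      show "Phi_star p r M (X * g) $$ (k, l) = Phi_star p r M X $$ (k, l)"
        using GL_entry[OF D_props(1)[OF s r X] D_props(2)[OF s r X] _ _ M r k l] g by auto
    qed
  qed
  show ?thesis
    unfolding Let_def using claim1[OF s M r] claim2[OF s M r] ohf gl by blast
qed

end
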